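(* Let $(\mathcal{P},\cdot)$ be a finite-dimensional complex admissible Poisson algebra such that $\mathfrak{g}_{\mathcal{P}}$ is a simple complex Lie algebra. Then $U\bullet V=0$ for all $U,V\in\mathcal{P}$; equivalently $U\cdot V=\{U,V\}$ for all $U,V$, i.e. $\mathcal{A}_{\mathcal{P}}^2=\{0\}$.
   Context: Associator: $A(X,Y,Z)=(X\cdot Y)\cdot Z-X\cdot(Y\cdot Z)$. An admissible Poisson algebra is a vector space $\mathcal{P}$ with a bilinear product $\cdot$ satisfying $3A(X,Y,Z)=(X\cdot Z)\cdot Y+(Y\cdot Z)\cdot X-(Y\cdot X)\cdot Z-(Z\cdot X)\cdot Y$ for all $X,Y,Z$. $\{X,Y\}=\frac12(X\cdot Y-Y\cdot X)$, $X\bullet Y=\frac12(X\cdot Y+Y\cdot X)$; $\mathfrak{g}_{\mathcal{P}}=(\mathcal{P},\{\,,\,\})$, $\mathcal{A}_{\mathcal{P}}=(\mathcal{P},\bullet)$; these form a Poisson algebra (Lie bracket, commutative associative product, Leibniz rule $\{X\bullet Y,Z\}=X\bullet\{Y,Z\}+\{X,Z\}\bullet Y$). *)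

theory Defs
  imports Complex_Main
begin

text \<open>A complex vector space is modelled as a type 'a of class ab_group_add together with
  a scalar multiplication sc by complex numbers satisfying the vector space axioms
  (library locale vector_space).\<close>

definition cbilinear :: "(complex \<Rightarrow> 'a::ab_group_add \<Rightarrow> 'a) \<Rightarrow> ('a \<Rightarrow> 'a \<Rightarrow> 'a) \<Rightarrow> bool" where
  "cbilinear sc m \<longleftrightarrow>
     (\<forall>x y z. m (x + y) z = m x z + m y z) \<and>
     (\<forall>x y z. m x (y + z) = m x y + m x z) \<and>
     (\<forall>c x y. m (sc c x) y = sc c (m x y)) \<and>
     (\<forall>c x y. m x (sc c y) = sc c (m x y))"

definition cfinite_dim :: "(complex \<Rightarrow> 'a::ab_group_add \<Rightarrow> 'a) \<Rightarrow> bool" where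
  "cfinite_dim sc \<longleftrightarrow> (\<exists>S::'a set. finite S \<and> module.span sc S = UNIV)"

definition assoc :: "('a::ab_group_add \<Rightarrow> 'a \<Rightarrow> 'a) \<Rightarrow> 'a \<Rightarrow> 'a \<Rightarrow> 'a \<Rightarrow> 'a" where
  "assoc m X Y Z = m (m X Y) Z - m X (m Y Z)"

definition admissible_poisson :: "(complex \<Rightarrow> 'a::ab_group_add \<Rightarrow> 'a) \<Rightarrow> ('a \<Rightarrow> 'a \<Rightarrow> 'a) \<Rightarrow> bool" where
  "admissible_poisson sc m \<longleftrightarrow> cbilinear sc m \<and>
     (\<forall>X Y Z. sc 3 (assoc m X Y Z) =
        m (m X Z) Y + m (m Y Z) X - m (m Y X) Z - m (m Z X) Y)"

definition pbracket :: "(complex \<Rightarrow> 'a::ab_group_add \<Rightarrow> 'a) \<Rightarrow> ('a \<Rightarrow> 'a \<Rightarrow> 'a) \<Rightarrow> 'a \<Rightarrow> 'a \<Rightarrow> 'a" where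
  "pbracket sc m X Y = sc (1/2) (m X Y - m Y X)"

definition pbullet :: "(complex \<Rightarrow> 'a::ab_group_add \<Rightarrow> 'a) \<Rightarrow> ('a \<Rightarrow> 'a \<Rightarrow> 'a) \<Rightarrow> 'a \<Rightarrow> 'a \<Rightarrow> 'a" where
  "pbullet sc m X Y = sc (1/2) (m X Y + m Y X)"

definition lie_ideal :: "(complex \<Rightarrow> 'a::ab_group_add \<Rightarrow> 'a) \<Rightarrow> ('a \<Rightarrow> 'a \<Rightarrow> 'a) \<Rightarrow> 'a set \<Rightarrow> bool" where
  "lie_ideal sc br I \<longleftrightarrow> module.subspace sc I \<and> (\<forall>x. \<forall>y\<in>I. br x y \<in> I)"

definition simple_lie :: "(complex \<Rightarrow> 'a::ab_group_add \<Rightarrow> 'a) \<Rightarrow> ('a \<Rightarrow> 'a \<Rightarrow> 'a) \<Rightarrow> bool" where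
  "simple_lie sc br \<longleftrightarrow> (\<exists>x y. br x y \<noteq> 0) \<and>
     (\<forall>I. lie_ideal sc br I \<longrightarrow> I = {0} \<or> I = UNIV)"

end

theory Submission imports Defs begin

locale apa = vector_space sc for sc :: "complex \<Rightarrow> 'a::ab_group_add \<Rightarrow> 'a" +
  fixes m :: "'a \<Rightarrow> 'a \<Rightarrow> 'a"
  assumes bil: "cbilinear sc m"
    and adm: "\<forall>X Y Z. sc 3 (assoc m X Y Z) =
        m (m X Z) Y + m (m Y Z) X - m (m Y X) Z - m (m Z X) Y"
begin

lemma madd1: "m (x + y) z = m x z + m y z" using bil by (simp add: cbilinear_def)
lemma madd2: "m x (y + z) = m x y + m x z" using bil by (simp add: cbilinear_def)
lemma msc1: "m (sc c x) y = sc c (m x y)" using bil by (simp add: cbilinear_def)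
lemma msc2: "m x (sc c y) = sc c (m x y)" using bil by (simp add: cbilinear_def)

lemma three: "sc 3 x = x + x + x"
proof -
  have "sc 3 x = sc (1 + 1 + 1) x" by simp
  also have "\<dots> = x + x + x" by (simp only: scale_left_distrib scale_one)
  finally show ?thesis .
qed

lemma adm': "(m (m x y) z - m x (m y z)) + (m (m x y) z - m x (m y z)) + (m (m x y) z - m x (m y z))
   = m (m x z) y + m (m y z) x - m (m y x) z - m (m z x) y"
  using adm by (metis assoc_def three)

lemma thrice0: fixes t :: 'a assumes "t + t + t = 0" shows "t = 0"
proof -
  note assms
  then have "sc 3 t = 0" by (simp add: three)
  then show "t = 0" by simp
qed

lemma assoc_raw:
  "m (m x y) z + m (m y x) z + m z (m x y) + m z (m y x) =
   m x (m y z) + m x (m z y) + m (m y z) x + m (m z y) x"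
proof -
  let ?A = "\<lambda>x y z. (m (m x y) z - m x (m y z)) + (m (m x y) z - m x (m y z)) + (m (m x y) z - m x (m y z))
   - (m (m x z) y + m (m y z) x - m (m y x) z - m (m z x) y)"
  have h: "\<And>x y z. ?A x y z = 0" using adm' by simp
  let ?T = "m (m x y) z + m (m y x) z + m z (m x y) + m z (m y x) -
   (m x (m y z) + m x (m z y) + m (m y z) x + m (m z y) x)"
  have "?T + ?T + ?T = ?A x y z + ?A x z y - ?A z x y - ?A z y x"
    by (simp add: algebra_simps)
  also have "\<dots> = 0" by (simp only: h diff_zero add_0 diff_0_right)
  finally have "?T = 0" by (rule thrice0)
  then show ?thesis by simp
qed

lemma leib_raw:
  "m (m x y) z + m (m y x) z - m z (m x y) - m z (m y x) - m x (m y z) + m x (m z y)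
   - m (m y z) x + m (m z y) x - m (m x z) y + m (m z x) y - m y (m x z) + m y (m z x) = 0"
proof -
  let ?A = "\<lambda>x y z. (m (m x y) z - m x (m y z)) + (m (m x y) z - m x (m y z)) + (m (m x y) z - m x (m y z))
   - (m (m x z) y + m (m y z) x - m (m y x) z - m (m z x) y)"
  have h: "\<And>x y z. ?A x y z = 0" using adm' by simp
  let ?T = "m (m x y) z + m (m y x) z - m z (m x y) - m z (m y x) - m x (m y z) + m x (m z y)
   - m (m y z) x + m (m z y) x - m (m x z) y + m (m z x) y - m y (m x z) + m y (m z x)"
  have "?T + ?T + ?T = ?A x y z - ?A x z y + ?A y x z - ?A y z x + ?A z x y + ?A z y x"
    by (simp add: algebra_simps)
  also have "\<dots> = 0" by (simp only: h diff_zero add_0 diff_0_right)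
  finally show "?T = 0" by (rule thrice0)
qed

lemma m0l[simp]: "m 0 y = 0"
proof -
  have "m 0 y + m 0 y = m 0 y" by (metis madd1 add_0)
  then show ?thesis by (rule add_cancel_left_right[THEN iffD1])
qed
lemma m0r[simp]: "m x 0 = 0"
proof -
  have "m x 0 + m x 0 = m x 0" by (metis madd2 add_0)
  then show ?thesis by (rule add_cancel_left_right[THEN iffD1])
qed
lemma mneg1: "m (- x) y = - m x y"
proof -
  have "m (- x) y + m x y = 0" by (metis madd1 left_minus m0l)
  then show ?thesis by (simp add: eq_neg_iff_add_eq_0)
qed
lemma mneg2: "m x (- y) = - m x y"
proof -
  have "m x (- y) + m x y = 0" by (metis madd2 left_minus m0r)
  then show ?thesis by (simp add: eq_neg_iff_add_eq_0)
qed
lemma msub1: "m (x - y) z = m x z - m y z"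
  by (metis diff_conv_add_uminus madd1 mneg1)
lemma msub2: "m x (y - z) = m x y - m x z"
  by (metis diff_conv_add_uminus madd2 mneg2)

abbreviation "bu \<equiv> pbullet sc m"
abbreviation "bk \<equiv> pbracket sc m"

definition "pp x y = m x y + m y x"
definition "qq x y = m x y - m y x"

lemma bu_pp: "bu x y = sc (1/2) (pp x y)" by (simp add: pbullet_def pp_def)
lemma bk_qq: "bk x y = sc (1/2) (qq x y)" by (simp add: pbracket_def qq_def)
lemma pp_sc1: "pp (sc c x) y = sc c (pp x y)" by (simp add: pp_def msc1 msc2 scale_right_distrib)
lemma pp_sc2: "pp x (sc c y) = sc c (pp x y)" by (simp add: pp_def msc1 msc2 scale_right_distrib)
lemma qq_sc1: "qq (sc c x) y = sc c (qq x y)" by (simp add: qq_def msc1 msc2 scale_right_diff_distrib)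
lemma qq_sc2: "qq x (sc c y) = sc c (qq x y)" by (simp add: qq_def msc1 msc2 scale_right_diff_distrib)

lemma pp_assoc: "pp (pp x y) z = pp x (pp y z)"
proof -
  have "pp (pp x y) z - pp x (pp y z) = 
   m (m x y) z + m (m y x) z + m z (m x y) + m z (m y x) -
   (m x (m y z) + m x (m z y) + m (m y z) x + m (m z y) x)"
    by (simp add: pp_def madd1 madd2 algebra_simps)
  also have "\<dots> = 0" using assoc_raw by simp
  finally show ?thesis by simp
qed

lemma qq_leib: "qq (pp x y) z = pp x (qq y z) + pp (qq x z) y"
proof -
  have "qq (pp x y) z - (pp x (qq y z) + pp (qq x z) y) = 
   m (m x y) z + m (m y x) z - m z (m x y) - m z (m y x) - m x (m y z) + m x (m z y)
   - m (m y z) x + m (m z y) x - m (m x z) y + m (m z x) y - m y (m x z) + m y (m z x)"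
    by (simp add: pp_def qq_def madd1 madd2 msub1 msub2 algebra_simps)
  also have "\<dots> = 0" using leib_raw by simp
  finally show ?thesis by simp
qed

lemma bu_assoc: "bu (bu x y) z = bu x (bu y z)"
  by (simp add: bu_pp pp_sc1 pp_sc2 pp_assoc)

lemma leibniz: "bk (bu x y) z = bu x (bk y z) + bu (bk x z) y"
  by (simp add: bu_pp bk_qq pp_sc1 pp_sc2 qq_sc1 qq_sc2 qq_leib scale_right_distrib)


lemma pp_comm: "pp x y = pp y x" by (simp add: pp_def add.commute)
lemma qq_anti: "qq x y = - qq y x" by (simp add: qq_def)
lemma bu_comm: "bu x y = bu y x" by (simp add: bu_pp pp_comm)
lemma bk_anti: "bk x y = - bk y x" by (metis bk_qq qq_anti scale_minus_right)
lemma pp_add2: "pp z (x + y) = pp z x + pp z y"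
  by (simp add: pp_def madd1 madd2 add_ac)
lemma qq_add2: "qq z (x + y) = qq z x + qq z y"
  by (simp add: qq_def madd1 madd2 algebra_simps)
lemma bu_add2: "bu z (x + y) = bu z x + bu z y"
  by (simp add: bu_pp pp_add2 scale_right_distrib)
lemma bu_sc1: "bu (sc c x) y = sc c (bu x y)"
  by (simp add: bu_pp pp_sc1 scale_scale mult.commute)
lemma bu_sc2: "bu x (sc c y) = sc c (bu x y)"
  by (simp add: bu_pp pp_sc2 scale_scale mult.commute)
lemma bu_0l[simp]: "bu 0 y = 0" by (simp add: pbullet_def)
lemma bu_0r[simp]: "bu y 0 = 0" by (simp add: pbullet_def)
lemma bu_neg2: "bu x (- y) = - bu x y"
  by (metis add_cancel_right_right add.right_inverse bu_add2 bu_0r minus_unique)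
lemma bu_sub2: "bu x (y - z) = bu x y - bu x z"
  by (metis bu_add2 bu_neg2 diff_conv_add_uminus)
lemma bk_0l[simp]: "bk 0 y = 0" by (simp add: pbracket_def)
lemma bk_0r[simp]: "bk y 0 = 0" by (simp add: pbracket_def)
lemma bk_add2: "bk z (x + y) = bk z x + bk z y"
  by (simp add: bk_qq qq_add2 scale_right_distrib)
lemma bk_sc2: "bk x (sc c y) = sc c (bk x y)"
  by (simp add: bk_qq qq_sc2 scale_scale mult.commute)

lemma bu_left_comm: "bu a (bu x v) = bu x (bu a v)"
  by (metis bu_assoc bu_comm)

definition "Ann = {v. \<forall>x. bu x v = 0}"
definition "Cen = {v. \<forall>x. bk x v = 0}"

lemma ann_ideal: "lie_ideal sc bk Ann"
  unfolding lie_ideal_def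
proof (intro conjI allI ballI)
  show "subspace Ann"
    unfolding subspace_def Ann_def by (simp add: bu_add2 bu_sc2)
next
  fix x v assume v: "v \<in> Ann"
  have "bu w (bk x v) = 0" for w
  proof -
    have "bk (bu v w) x = bu v (bk w x) + bu (bk v x) w" by (rule leibniz)
    moreover have "bu v w = 0" using v by (metis (mono_tags) Ann_def bu_comm mem_Collect_eq)
    moreover have "bu v (bk w x) = 0" using v by (metis (mono_tags) Ann_def bu_comm mem_Collect_eq)
    ultimately have "bu (bk v x) w = 0" by simp
    then have "bu w (bk v x) = 0" by (simp add: bu_comm)
    then show ?thesis by (subst bk_anti) (simp add: bu_neg2)
  qed
  then show "bk x v \<in> Ann" by (simp add: Ann_def)
qed

lemma cen_ideal: "lie_ideal sc bk Cen"
  unfolding lie_ideal_def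
proof (intro conjI allI ballI)
  show "subspace Cen"
    unfolding subspace_def Cen_def by (simp add: bk_add2 bk_sc2)
next
  fix x v assume v: "v \<in> Cen"
  then show "bk x v \<in> Cen" by (simp add: Cen_def)
qed

lemma idem_central: assumes e: "bu e e = e" shows "bk e z = 0"
proof -
  define u where "u = bk e z"
  have u: "u = bu e u + bu e u"
    using leibniz[of e e z] unfolding e u_def[symmetric] by (metis bu_comm)
  have "bu e u = bu e (bu e u) + bu e (bu e u)"
    by (metis u bu_add2)
  also have "bu e (bu e u) = bu e u"
    by (metis bu_assoc e)
  finally have "bu e u = bu e u + bu e u" .
  then have "bu e u = 0" by (metis add_cancel_left_right)
  then show ?thesis using u by (simp add: u_def)
qed

end

locale apa_fd = apa sc m + finite_dimensional_vector_space sc Basis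
  for sc :: "complex \<Rightarrow> 'a::ab_group_add \<Rightarrow> 'a" and m and Basis +
  assumes simple: "simple_lie sc (pbracket sc m)"
begin

lemma cen0: "Cen = {0}"
proof -
  from simple obtain x y where xy: "bk x y \<noteq> 0" unfolding simple_lie_def by blast
  have "lie_ideal sc bk Cen \<longrightarrow> Cen = {0} \<or> Cen = UNIV" using simple unfolding simple_lie_def by blast
  then have "Cen = {0} \<or> Cen = UNIV" using cen_ideal by blast
  moreover have "Cen \<noteq> UNIV"
  proof
    assume "Cen = UNIV"
    then have "y \<in> Cen" by simp
    then show False using xy unfolding Cen_def by blast
  qed
  ultimately show ?thesis by blast
qed

lemma idem0: assumes "bu e e = e" shows "e = 0"
proof -
  have "bk x e = 0" for x
    using idem_central[OF assms, of x] bk_anti[of x e] by simp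
  then have "e \<in> Cen" unfolding Cen_def by blast
  then show "e = 0" using cen0 by blast
qed


lemma vs: "vector_space sc" by unfold_locales

lemma lin_bu: "Vector_Spaces.linear sc sc (bu a)"
  unfolding Vector_Spaces.linear_iff using vs by (simp add: bu_add2 bu_sc2)

lemma lin_pow: "Vector_Spaces.linear sc sc (f ^^ k)" if "Vector_Spaces.linear sc sc f" for f :: "'a \<Rightarrow> 'a"
proof (induction k)
  case 0
  show ?case unfolding Vector_Spaces.linear_iff using vs by simp
next
  case (Suc k)
  then show ?case using that Vector_Spaces.linear_compose[of sc sc "f ^^ k" sc f]
    by (simp add: funpow_Suc_right[symmetric] o_def)
qed

lemma surj_inj_on:
  assumes lin: "Vector_Spaces.linear sc sc f" and W: "subspace W" and fW: "f ` W = W"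
  shows "inj_on f W"
proof -
  interpret vp: vector_space_pair sc sc by unfold_locales
  obtain B where B: "B \<subseteq> W" "independent B" "W \<subseteq> span B" "card B = dim W"
    using basis_exists[of W] by blast
  have fin: "finite B" using B(2) finiteI_independent by blast
  have sB: "span B = W" using B(1,3) W span_minimal by blast
  have fBW: "f ` B \<subseteq> W" using B(1) fW by blast
  have WfB: "W \<subseteq> span (f ` B)"
    using vp.linear_span_image[OF lin, of B] sB fW by simp
  have "dim W \<le> card (f ` B)" by (rule span_card_ge_dim[OF fBW WfB]) (use fin in simp)
  moreover have "card (f ` B) \<le> card B" using fin by (rule card_image_le)
  ultimately have cc: "card (f ` B) = card B" using B(4) by simp
  then have injB: "inj_on f B" using fin by (simp add: eq_card_imp_inj_on)
  have indB: "independent (f ` B)"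
    by (rule card_le_dim_spanning[OF fBW WfB]) (use fin cc B(4) in simp_all)
  show ?thesis
  proof (rule inj_onI)
    fix x y assume x: "x \<in> W" and y: "y \<in> W" and eq: "f x = f y"
    have "f (x - y) = 0" using vp.linear_diff[OF lin] eq by simp
    moreover have "x - y \<in> span B" using x y sB W subspace_diff by blast
    ultimately have "x - y = 0"
      using vp.linear_indep_image_lemma[OF lin fin indB injB] by blast
    then show "x = y" by simp
  qed
qed

lemma pow_bu: "bu (((bu a) ^^ j) y) x = ((bu a) ^^ j) (bu y x)"
proof (induction j)
  case 0 then show ?case by simp
next
  case (Suc j)
  then show ?case by (simp add: bu_assoc)
qed

lemma nilp: "\<exists>k. \<forall>x. ((bu a) ^^ k) x = 0"
proof -
  interpret vp: vector_space_pair sc sc by unfold_locales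
  define T where "T = bu a"
  have linT: "Vector_Spaces.linear sc sc T" unfolding T_def by (rule lin_bu)
  define R where "R k = range (T ^^ k)" for k
  have subR: "subspace (R k)" for k
    unfolding R_def by (rule vp.linear_subspace_image[OF lin_pow[OF linT] subspace_UNIV])
  obtain k where k: "\<forall>j. dim (R k) \<le> dim (R j)"
    using ex_has_least_nat[of "\<lambda>_. True" 0 "\<lambda>k. dim (R k)"] by blast
  define W where "W = R k"
  have sub: "R (Suc k) \<subseteq> W" unfolding R_def W_def by (auto simp: funpow_swap1)
  have eqR: "R (Suc k) = W"
    using subspace_dim_equal[OF subR subR[of k] sub[unfolded W_def]] k W_def by simp
  have TW: "T ` W = W"
  proof -
    have "T ` W = range (T \<circ> (T ^^ k))" unfolding W_def R_def by (simp add: image_comp)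
    also have "\<dots> = R (Suc k)" unfolding R_def by simp
    finally show ?thesis using eqR by simp
  qed
  have subW: "subspace W" unfolding W_def by (rule subR)
  have injT: "inj_on T W" by (rule surj_inj_on[OF linT subW TW])
  have powW: "(T ^^ j) ` W = W \<and> inj_on (T ^^ j) W" for j
  proof (induction j)
    case 0 then show ?case by simp
  next
    case (Suc j)
    then have im: "(T ^^ Suc j) ` W = W" using TW by (metis funpow.simps(2) image_comp)
    have "inj_on (T \<circ> (T ^^ j)) W" using Suc injT by (simp add: comp_inj_on)
    then show ?case using im by (simp add: o_def)
  qed
  define c where "c = (T ^^ k) a"
  have cW: "c \<in> W" unfolding c_def W_def R_def by simp
  have Lc: "bu c x = (T ^^ Suc k) x" for x
    unfolding c_def T_def pow_bu by (simp add: funpow_swap1)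
  obtain e where eW: "e \<in> W" and ce: "(T ^^ Suc k) e = c"
    using cW powW[of "Suc k"] by (metis imageE)
  have invW: "bu x w \<in> W" if "w \<in> W" for x w
  proof -
    from that obtain u where "w = (T ^^ k) u" unfolding W_def R_def by blast
    then have "bu x w = (T ^^ k) (bu u x)" unfolding T_def by (metis bu_comm pow_bu)
    then show ?thesis unfolding W_def R_def by simp
  qed
  have ew: "bu e w = w" if w: "w \<in> W" for w
  proof -
    have "(T ^^ Suc k) (bu e w) = bu c (bu e w)" by (simp add: Lc)
    also have "\<dots> = bu (bu c e) w" by (simp add: bu_assoc)
    also have "\<dots> = bu c w" using ce Lc by simp
    also have "\<dots> = (T ^^ Suc k) w" by (simp add: Lc)
    finally show ?thesis using powW[of "Suc k"] invW[OF eW] w eW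
      by (meson inj_onD invW)
  qed
  have "e = 0" using idem0 ew[OF eW] by blast
  then have "\<forall>w\<in>W. w = 0" using ew by force
  then have "\<forall>x. (T ^^ k) x = 0" unfolding W_def R_def by blast
  then show ?thesis unfolding T_def by blast
qed


lemma ann_univ: "Ann = UNIV"
proof (rule ccontr)
  assume nU: "Ann \<noteq> UNIV"
  have "lie_ideal sc bk Ann \<longrightarrow> Ann = {0} \<or> Ann = UNIV" using simple unfolding simple_lie_def by blast
  then have A0: "Ann = {0}" using ann_ideal nU by blast
  from simple obtain x0 y0 where xy: "bk x0 y0 \<noteq> 0" unfolding simple_lie_def by blast
  define inv where "inv V \<longleftrightarrow> subspace V \<and> (\<forall>a. \<forall>v\<in>V. bu a v \<in> V) \<and> V \<noteq> {0}" for V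
  have "inv UNIV" unfolding inv_def using xy by auto
  then obtain V where V: "inv V" and Vmin: "\<forall>V'. inv V' \<longrightarrow> dim V \<le> dim V'"
    using ex_has_least_nat[of inv UNIV dim] by blast
  have subV: "subspace V" and invV: "\<And>a v. v \<in> V \<Longrightarrow> bu a v \<in> V" and nz: "V \<noteq> {0}"
    using V unfolding inv_def by auto
  have kill: "bu a v = 0" if v: "v \<in> V" for a v
  proof -
    interpret vp: vector_space_pair sc sc by unfold_locales
    define K where "K = V \<inter> {v. bu a v = 0}"
    have subK: "subspace K" unfolding K_def
      by (rule subspace_inter[OF subV vp.linear_subspace_kernel[OF lin_bu]])
    have invK: "bu x w \<in> K" if "w \<in> K" for x w
      using that invV bu_left_comm[of a x w] unfolding K_def by auto
    have "K = V"
    proof (cases "K = {0}")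
      case False
      then have "inv K" unfolding inv_def using subK invK by blast
      then have "dim V \<le> dim K" using Vmin by blast
      then show ?thesis using subspace_dim_equal[OF subK subV] K_def by blast
    next
      case True
      obtain v0 where v0: "v0 \<in> V" "v0 \<noteq> 0" using nz subV subspace_0 by blast
      obtain k where k: "\<forall>x. ((bu a) ^^ k) x = 0" using nilp by blast
      have "((bu a) ^^ j) v0 \<in> V \<and> ((bu a) ^^ j) v0 \<noteq> 0" for j
      proof (induction j)
        case 0 then show ?case using v0 by simp
      next
        case (Suc j)
        then have "bu a (((bu a) ^^ j) v0) \<in> V" using invV by blast
        moreover have "bu a (((bu a) ^^ j) v0) \<noteq> 0"
        proof
          assume "bu a (((bu a) ^^ j) v0) = 0"
          then have "((bu a) ^^ j) v0 \<in> K" using Suc unfolding K_def by blast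
          then show False using True Suc by blast
        qed
        ultimately show ?case by simp
      qed
      then show ?thesis using k by blast
    qed
    then show ?thesis using v unfolding K_def by blast
  qed
  have "V \<subseteq> Ann" unfolding Ann_def using kill by blast
  then show False using A0 nz subV subspace_0 by blast
qed

end

theorem mainTheorem13:
  fixes sc :: "complex \<Rightarrow> 'a::ab_group_add \<Rightarrow> 'a"
    and m :: "'a \<Rightarrow> 'a \<Rightarrow> 'a"
  assumes "vector_space sc"
    and "cfinite_dim sc"
    and "admissible_poisson sc m"
    and "simple_lie sc (pbracket sc m)"
  shows "\<forall>U V. pbullet sc m U V = 0"
proof -
  interpret vs: vector_space sc by fact
  obtain S where S: "finite S" "vs.span S = UNIV"
    using assms(2) unfolding cfinite_dim_def by blast
  obtain B where B: "vs.independent B" "UNIV \<subseteq> vs.span B"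
    using vs.basis_exists[of UNIV] by blast
  have fB: "finite B" using vs.independent_span_bound[OF S(1) B(1)] S(2) by auto
  interpret apa_fd sc m B
    using assms B fB unfolding admissible_poisson_def
    by unfold_locales auto
  show ?thesis using ann_univ unfolding Ann_def by (auto simp: bu_comm)
qed

end
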